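(* Let $n\geqslant 1$ be an integer and let $I_\nu$ denote the modified Bessel function of the first kind of order $\nu$. Then for every $\kappa>0$, \[ J(\kappa):=2 I_{n-1}(\kappa)I_{n+1}(\kappa) -I_n(\kappa)^2+ \frac{4 n }{\kappa}I_{n-1}(\kappa )I_n(\kappa) - I_{n-1}(\kappa)^2\geqslant 0. \]
   Context: For $\nu\in\mathbb Z$ and $\zeta\in\mathbb C$, $I_\nu(\zeta)=\sum_{k\geqslant 0}\frac{(\zeta/2)^{2k+\nu}}{k!\,\Gamma(k+\nu+1)}$ (with $I_{-\nu}=I_\nu$ for integer $\nu$). *)

theory Defs
  imports "HOL-Analysis.Analysis"
begin

text \<open>For integer order nu, I_nu(z) = sum_k (z/2)^(2k+nu) / (k! Gamma(k+nu+1)), and I_{-nu} = I_nu.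
For nonnegative integer m, Gamma(k+m+1) = (k+m)!.\<close>

definition besselI :: "int \<Rightarrow> real \<Rightarrow> real" where
  "besselI \<nu> z = (let m = nat \<bar>\<nu>\<bar> in
     (\<Sum>k. (z / 2) ^ (2 * k + m) / (fact k * fact (k + m))))"

end

theory Submission imports Defs begin
definition aa :: "nat \<Rightarrow> real \<Rightarrow> nat \<Rightarrow> real" where
  "aa m t k = t ^ (2 * k + m) / (fact k * fact (k + m))"

lemma pw: "t ^ (2 * k + m) / (fact k * 1) = t ^ m * (inverse (fact k) * ((t::real)^2) ^ k)"
proof -
  have "((t::real)^2)^k = t^(2*k)" by (simp add: power_mult)
  then show ?thesis by (simp add: power_add divide_inverse mult_ac)
qed

lemma fS: "fact (Suc i) = (real i + 1) * (fact i :: real)" by (simp add: algebra_simps)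
lemma fS2: "fact (i + Suc m) = (real i + real m + 1) * (fact (i + m) :: real)" by (simp add: algebra_simps)
lemma fS3: "fact (Suc i + m) = (real i + real m + 1) * (fact (i + m) :: real)" by (simp add: algebra_simps)
lemma pS: "(t::real) ^ (2 * Suc i + m) = t ^ (2 * i + m) * t * t" by (simp add: algebra_simps)
lemma pS2: "(t::real) ^ (2 * i + Suc m) = t ^ (2 * i + m) * t" by (simp add: algebra_simps)
lemma pS3: "(t::real) ^ (2 * i + Suc (Suc m)) = t ^ (2 * i + m) * t * t" by (simp add: algebra_simps)
lemma fS4: "fact (i + Suc (Suc m)) = (real i + real m + 2) * (real i + real m + 1) * (fact (i + m) :: real)" by (simp add: algebra_simps)

lemma aa_Suc: assumes "t > 0" shows "aa m t (Suc i) = aa (Suc m) t i * t / (i + 1)"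
proof -
  have P: "fact i \<noteq> (0::real)" "fact (i+m) \<noteq> (0::real)" by auto
  have a: "real i + 1 \<noteq> 0" "real i + real m + 1 \<noteq> 0" by linarith+
  show ?thesis unfolding aa_def fS fS2 fS3 pS pS2
    using P a assms by (simp add: divide_simps)
qed

lemma aa_down: assumes "t > 0" shows "aa m t j = aa (Suc m) t j * (j + m + 1) / t"
proof -
  have P: "fact j \<noteq> (0::real)" "fact (j+m) \<noteq> (0::real)" by auto
  have a: "real j + 1 \<noteq> 0" "real j + real m + 1 \<noteq> 0" by linarith+
  show ?thesis unfolding aa_def fS fS2 fS3 pS pS2
    using P a assms by (simp add: divide_simps)
qed

lemma aa_rec: assumes "t > 0"
  shows "aa m t (Suc k) = aa (Suc (Suc m)) t k + (Suc m / t) * aa (Suc m) t (Suc k)"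
proof -
  have P: "fact k \<noteq> (0::real)" "fact (k+m) \<noteq> (0::real)" by auto
  have a: "real k + 1 \<noteq> 0" "real k + real m + 1 \<noteq> 0" "real k + real m + 2 \<noteq> 0" by linarith+
  have e: "Suc k + Suc m = k + Suc (Suc m)" "2 * Suc k + Suc m = 2 * k + Suc (Suc m) + 1" by auto
  show ?thesis unfolding aa_def e fS fS2 fS3 pS pS2 pS3 fS4 power_add
    using P a assms by (simp add: divide_simps) (simp add: algebra_simps)
qed

lemma aa_rec0: assumes "t > 0"
  shows "aa m t 0 = (Suc m / t) * aa (Suc m) t 0"
proof -
  have P: "fact m \<noteq> (0::real)" "real m + 1 \<noteq> 0" by auto
  show ?thesis unfolding aa_def using P assms by (simp add: divide_simps)
qed
lemma aa_nonneg: "t \<ge> 0 \<Longrightarrow> aa m t k \<ge> 0"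
  by (simp add: aa_def)

lemma aa_summable: assumes "t \<ge> 0" shows "summable (aa m t)"
proof (rule summable_comparison_test[where g = "\<lambda>k. t ^ m * (inverse (fact k) * (t^2) ^ k)"])
  show "summable (\<lambda>k. t ^ m * (inverse (fact k) * (t^2) ^ k))"
    by (intro summable_mult summable_exp)
  have "norm (aa m t k) \<le> t ^ m * (inverse (fact k) * (t^2) ^ k)" for k
  proof -
    have f1: "(1::real) \<le> fact (k + m)" by simp
    have "norm (aa m t k) = t ^ (2 * k + m) / (fact k * fact (k + m))"
      using assms by (simp add: aa_def)
    also have "\<dots> \<le> t ^ (2 * k + m) / (fact k * 1)"
      using assms f1 by (intro divide_left_mono mult_left_mono) auto
    also have "\<dots> = t ^ m * (inverse (fact k) * (t^2) ^ k)"
      by (rule pw)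
    finally show ?thesis .
  qed
  then show "\<exists>N. \<forall>n\<ge>N. norm (aa m t n) \<le> t ^ m * (inverse (fact n) * (t^2) ^ n)" by blast
qed

lemma bessel_rec: assumes "t > 0"
  shows "suminf (aa m t) = suminf (aa (Suc (Suc m)) t) + (Suc m / t) * suminf (aa (Suc m) t)"
proof -
  have s: "\<And>m. summable (aa m t)" using assms by (intro aa_summable) auto
  have "suminf (aa m t) = (\<Sum>k. aa m t (Suc k)) + aa m t 0"
    using suminf_split_head[OF s] by simp
  also have "(\<Sum>k. aa m t (Suc k)) = (\<Sum>k. aa (Suc (Suc m)) t k + (Suc m / t) * aa (Suc m) t (Suc k))"
    by (intro arg_cong[where f=suminf] ext aa_rec[OF assms])
  also have "\<dots> = suminf (aa (Suc (Suc m)) t) + (Suc m / t) * (\<Sum>k. aa (Suc m) t (Suc k))"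
  proof -
    define c where "c = real (Suc m) / t"
    have sB: "summable (\<lambda>k. aa (Suc m) t (Suc k))" using s[of "Suc m"] by (subst summable_Suc_iff)
    have sB': "summable (\<lambda>k. c * aa (Suc m) t (Suc k))" by (rule summable_mult[OF sB])
    have "(\<Sum>k. aa (Suc (Suc m)) t k + c * aa (Suc m) t (Suc k)) = suminf (aa (Suc (Suc m)) t) + (\<Sum>k. c * aa (Suc m) t (Suc k))"
      by (rule suminf_add[OF s sB', symmetric])
    also have "(\<Sum>k. c * aa (Suc m) t (Suc k)) = c * (\<Sum>k. aa (Suc m) t (Suc k))"
      by (rule suminf_mult[OF sB])
    finally show ?thesis unfolding c_def .
  qed
  also have "(\<Sum>k. aa (Suc m) t (Suc k)) = suminf (aa (Suc m) t) - aa (Suc m) t 0"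
    using suminf_split_head[OF s] by simp
  finally show ?thesis using aa_rec0[OF assms, of m] by (simp add: algebra_simps)
qed

lemma term_ineq: assumes "t > 0" "i \<le> k"
  shows "2 * (aa (Suc m) t i * aa (Suc m) t (k - i))
     \<le> aa m t (Suc i) * aa m t (k - i) + aa m t i * aa m t (Suc (k - i))"
proof -
  define j where "j = k - i"
  define ci where "ci = aa (Suc m) t i"
  define cj where "cj = aa (Suc m) t j"
  have c: "ci * cj \<ge> 0" unfolding ci_def cj_def using assms aa_nonneg by simp
  have nz: "t \<noteq> 0" "real i + 1 \<noteq> 0" "real j + 1 \<noteq> 0" using assms by auto
  have e1: "aa m t (Suc i) * aa m t j = ci * cj * ((j + m + 1) / (i + 1))"
  proof -
    have "aa m t (Suc i) * aa m t j = (ci * t / (i + 1)) * (cj * (j + m + 1) / t)"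
      unfolding ci_def cj_def by (simp only: aa_Suc[OF assms(1), of m i] aa_down[OF assms(1), of m j])
    also have "\<dots> = ci * cj * ((j + m + 1) / (i + 1))" using nz by (simp add: divide_simps)
    finally show ?thesis .
  qed
  have e2: "aa m t i * aa m t (Suc j) = ci * cj * ((i + m + 1) / (j + 1))"
  proof -
    have "aa m t i * aa m t (Suc j) = (ci * (i + m + 1) / t) * (cj * t / (j + 1))"
      unfolding ci_def cj_def by (simp only: aa_Suc[OF assms(1), of m j] aa_down[OF assms(1), of m i])
    also have "\<dots> = ci * cj * ((i + m + 1) / (j + 1))" using nz by (simp add: divide_simps)
    finally show ?thesis .
  qed
  have r: "2 \<le> (real j + m + 1) / (i + 1) + (real i + m + 1) / (j + 1)"
  proof -
    have "(real j + 1) / (i + 1) + (real i + 1) / (j + 1) \<le> (real j + m + 1) / (i + 1) + (real i + m + 1) / (j + 1)"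
      by (intro add_mono divide_right_mono) auto
    moreover have "2 \<le> (real j + 1) / (i + 1) + (real i + 1) / (j + 1)"
    proof -
      define p where "p = real i + 1"
      define q where "q = real j + 1"
      have pq: "p > 0" "q > 0" unfolding p_def q_def by auto
      have "0 \<le> (p - q)^2" by simp
      then have h: "2 * (p * q) \<le> q * q + p * p"
        by (simp add: power2_eq_square algebra_simps)
      have "q / p + p / q = (q * q + p * p) / (p * q)" using pq by (simp add: field_simps)
      moreover have "2 \<le> (q * q + p * p) / (p * q)" using h pq by (simp add: pos_le_divide_eq)
      ultimately have "2 \<le> q / p + p / q" by simp
      then show ?thesis unfolding p_def q_def by (simp add: add.commute)
    qed
    ultimately show ?thesis by linarith
  qed
  have "2 * (ci * cj) \<le> ci * cj * ((j + m + 1) / (i + 1)) + ci * cj * ((i + m + 1) / (j + 1))"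
    using mult_left_mono[OF r c] by (simp add: algebra_simps)
  then show ?thesis using e1 e2 unfolding j_def ci_def cj_def by simp
qed

lemma coef_ineq: assumes "t > 0"
  shows "(\<Sum>i\<le>k. aa (Suc m) t i * aa (Suc m) t (k - i)) \<le> (\<Sum>i\<le>Suc k. aa m t i * aa m t (Suc k - i))"
    (is "?Q \<le> ?P")
proof -
  have n: "\<And>i j. aa m t i * aa m t j \<ge> 0" using assms aa_nonneg by simp
  have p1: "(\<Sum>i\<le>k. aa m t (Suc i) * aa m t (k - i)) \<le> ?P"
  proof -
    have "?P = aa m t 0 * aa m t (Suc k - 0) + (\<Sum>i\<le>k. aa m t (Suc i) * aa m t (Suc k - Suc i))"
      by (rule sum.atMost_Suc_shift)
    then show ?thesis using n[of 0 "Suc k"] n[of "Suc k" 0] by simp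
  qed
  have p2: "(\<Sum>i\<le>k. aa m t i * aa m t (Suc (k - i))) \<le> ?P"
  proof -
    have "(\<Sum>i\<le>k. aa m t i * aa m t (Suc (k - i))) = (\<Sum>i\<le>k. aa m t i * aa m t (Suc k - i))"
      by (intro sum.cong) (auto simp: Suc_diff_le)
    then show ?thesis using n[of "Suc k" 0] n[of 0 "Suc k"] by (simp add: sum.atMost_Suc)
  qed
  have "2 * ?Q \<le> (\<Sum>i\<le>k. aa m t (Suc i) * aa m t (k - i) + aa m t i * aa m t (Suc (k - i)))"
    unfolding sum_distrib_left by (intro sum_mono term_ineq[OF assms]) auto
  also have "\<dots> \<le> 2 * ?P" using p1 p2 by (simp add: sum.distrib)
  finally show ?thesis by simp
qed

lemma sq_ineq: assumes "t > 0"
  shows "(suminf (aa (Suc m) t))^2 \<le> (suminf (aa m t))^2"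
proof -
  have s: "\<And>m. summable (\<lambda>k. norm (aa m t k))" using assms aa_nonneg aa_summable by simp
  let ?P = "\<lambda>k. \<Sum>i\<le>k. aa m t i * aa m t (k - i)"
  let ?Q = "\<lambda>k. \<Sum>i\<le>k. aa (Suc m) t i * aa (Suc m) t (k - i)"
  have sP: "summable ?P" by (rule summable_Cauchy_product[OF s s])
  have sQ: "summable ?Q" by (rule summable_Cauchy_product[OF s s])
  have "(suminf (aa (Suc m) t))^2 = suminf ?Q"
    using Cauchy_product[OF s s] by (simp add: power2_eq_square)
  also have "\<dots> \<le> (\<Sum>k. ?P (Suc k))"
  proof (rule suminf_le[OF coef_ineq[OF assms] sQ])
    show "summable (\<lambda>k. ?P (Suc k))" by (subst summable_Suc_iff) (rule sP)
  qed
  also have "\<dots> = suminf ?P - ?P 0" by (rule suminf_split_head[OF sP])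
  finally have h1: "(suminf (aa (Suc m) t))^2 \<le> suminf ?P - ?P 0" .
  have h2: "?P 0 \<ge> 0" using assms aa_nonneg by simp
  have h3: "suminf ?P = (suminf (aa m t))^2"
    using Cauchy_product[OF s s] by (simp add: power2_eq_square)
  show ?thesis using h1 h2 h3 by linarith
qed

theorem lemmaA1:
  fixes n :: nat and \<kappa> :: real
  assumes "n \<ge> 1" and "\<kappa> > 0"
  shows "2 * besselI (int n - 1) \<kappa> * besselI (int n + 1) \<kappa> - (besselI (int n) \<kappa>)^2
         + (4 * real n / \<kappa>) * besselI (int n - 1) \<kappa> * besselI (int n) \<kappa>
         - (besselI (int n - 1) \<kappa>)^2 \<ge> 0"
proof -
  obtain m where n: "n = Suc m" using assms(1) by (cases n) auto
  define t where "t = \<kappa> / 2"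
  have t: "t > 0" using assms t_def by simp
  have b: "besselI (int k) \<kappa> = suminf (aa k t)" for k
  proof -
    have "aa k t = (\<lambda>j. t ^ (2*j+k) / (fact j * fact (j+k)))" by (simp add: fun_eq_iff aa_def)
    then show ?thesis by (simp add: besselI_def t_def)
  qed
  have e1: "besselI (int n - 1) \<kappa> = suminf (aa m t)"
    using b[of m] n by simp
  have e2: "besselI (int n + 1) \<kappa> = suminf (aa (Suc (Suc m)) t)"
    using b[of "Suc (Suc m)"] n by simp
  have e3: "besselI (int n) \<kappa> = suminf (aa (Suc m) t)"
    using b[of "Suc m"] n by simp
  define A where "A = suminf (aa m t)"
  define B where "B = suminf (aa (Suc m) t)"
  define C where "C = suminf (aa (Suc (Suc m)) t)"
  have rec: "A = C + (Suc m / t) * B" unfolding A_def B_def C_def by (rule bessel_rec[OF t])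
  have k: "4 * real n / \<kappa> = 2 * (Suc m / t)" using n assms unfolding t_def by (simp add: field_simps)
  define c where "c = real (Suc m) / t"
  have Ceq: "C = A - c * B" using rec unfolding c_def by simp
  have "2 * A * C - B^2 + 2 * c * A * B - A^2 = A^2 - B^2"
    unfolding Ceq by (simp add: algebra_simps power2_eq_square)
  moreover have "B^2 \<le> A^2" unfolding A_def B_def by (rule sq_ineq[OF t])
  ultimately have fin: "2 * A * C - B^2 + 2 * c * A * B - A^2 \<ge> 0" by linarith
  have k2: "4 * real n / \<kappa> = 2 * c" using k unfolding c_def .
  show ?thesis unfolding e1 e2 e3 k2 A_def[symmetric] B_def[symmetric] C_def[symmetric]
    using fin by (simp add: mult.assoc)
qed
end
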